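(* Let $R\in\mathrm{SO}(3)$ and let $q_s',q_s''\in\mathbb R^3$ for $s\in\{i,j,k\}$. Let $G_{ijk}$ be the $3\times3$ matrix whose rows are $(Rq_i'\times q_i'')^\top$, $(Rq_j'\times q_j'')^\top$, $(Rq_k'\times q_k'')^\top$, and let $M_{ijk}$ be the $6\times 6$ matrix $$M_{ijk}=\begin{bmatrix} q_i'' & -Rq_i' & -q_j'' & Rq_j' & 0 & 0\\ q_i'' & -Rq_i' & 0 & 0 & -q_k'' & Rq_k'\end{bmatrix}$$ (each entry a $3\times1$ block), which is the coefficient matrix of the linear system in $(\lambda_i,\mu_i,\lambda_j,\mu_j,\lambda_k,\mu_k)$ obtained from the equations $\lambda_s q_s''=\mu_s Rq_s'+t$ ($s=i,j,k$) by subtracting the $j$-th and $k$-th equations from the $i$-th. Then $\det G_{ijk}=\pm\det M_{ijk}$.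
   Context: $q_s'$ and $q_s''$ are the (homogeneous) image coordinates of the $s$-th point correspondence in the first and second calibrated camera, and $R$ is the relative rotation. The epipolar constraint $q_s''^\top[t]_\times R q_s'=0$ is linear in $t$ and can be written as $(Rq_s'\times q_s'')^\top t=0$ up to sign; $G_{ijk}$ collects these rows for three correspondences. Here $[a]_\times$ denotes the skew-symmetric matrix with $[a]_\times b=a\times b$. *)

theory Defs
  imports "HOL-Analysis.Analysis" "Jordan_Normal_Form.Determinant"
begin

definition coords3 :: "real^3 \<Rightarrow> real list" where
  "coords3 v = [v $ 1, v $ 2, v $ 3]"

definition stack6 :: "real^3 \<Rightarrow> real^3 \<Rightarrow> real Matrix.vec" where
  "stack6 a b = vec_of_list (coords3 a @ coords3 b)"

definition SO3 :: "(real^3^3) set" where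
  "SO3 = {R. orthogonal_matrix R \<and> Determinants.det R = 1}"

definition G_mat :: "real^3^3 \<Rightarrow> real^3 \<Rightarrow> real^3 \<Rightarrow> real^3 \<Rightarrow> real^3 \<Rightarrow> real^3 \<Rightarrow> real^3 \<Rightarrow> real^3^3" where
  "G_mat R qi' qi'' qj' qj'' qk' qk'' =
     vector [cross3 (R *v qi') qi'', cross3 (R *v qj') qj'', cross3 (R *v qk') qk'']"

definition M_mat :: "real^3^3 \<Rightarrow> real^3 \<Rightarrow> real^3 \<Rightarrow> real^3 \<Rightarrow> real^3 \<Rightarrow> real^3 \<Rightarrow> real^3 \<Rightarrow> real Matrix.mat" where
  "M_mat R qi' qi'' qj' qj'' qk' qk'' =
     mat_of_cols 6
       [stack6 qi'' qi'',
        stack6 (- (R *v qi')) (- (R *v qi')),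
        stack6 (- qj'') 0,
        stack6 (R *v qj') 0,
        stack6 0 (- qk''),
        stack6 0 (R *v qk')]"

end

theory Submission imports Defs begin

lemma det_exp:
  fixes f :: "nat \<times> nat \<Rightarrow> 'a::comm_ring_1"
  assumes "j < Suc n"
  shows "Determinant.det (Matrix.mat (Suc n) (Suc n) f) =
    (\<Sum>i<Suc n. if f (i,j) = 0 then 0 else f (i,j) * (-1)^(i+j) *
       Determinant.det (Matrix.mat n n (\<lambda>(i',j'). f (if i' < i then i' else Suc i', if j' < j then j' else Suc j'))))"
proof -
  have "Determinant.det (Matrix.mat (Suc n) (Suc n) f) =
     (\<Sum>i<Suc n. Matrix.mat (Suc n) (Suc n) f $$ (i,j) * cofactor (Matrix.mat (Suc n) (Suc n) f) i j)"
    by (rule laplace_expansion_column) (use assms in auto)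
  also have "\<dots> = (\<Sum>i<Suc n. if f (i,j) = 0 then 0 else f (i,j) * (-1)^(i+j) *
       Determinant.det (Matrix.mat n n (\<lambda>(i',j'). f (if i' < i then i' else Suc i', if j' < j then j' else Suc j'))))"
  proof (rule sum.cong[OF refl])
    fix i assume i: "i \<in> {..<Suc n}"
    have md: "mat_delete (Matrix.mat (Suc n) (Suc n) f) i j = Matrix.mat n n (\<lambda>(i',j'). f (if i' < i then i' else Suc i', if j' < j then j' else Suc j'))"
      unfolding mat_delete_def by (rule eq_matI) auto
    show "Matrix.mat (Suc n) (Suc n) f $$ (i,j) * cofactor (Matrix.mat (Suc n) (Suc n) f) i j = (if f (i,j) = 0 then 0 else f (i,j) * (-1)^(i+j) *
       Determinant.det (Matrix.mat n n (\<lambda>(i',j'). f (if i' < i then i' else Suc i', if j' < j then j' else Suc j'))))"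
      using i assms by (simp add: cofactor_def md)
  qed
  finally show ?thesis .
qed

lemma det_mat0: "Determinant.det (Matrix.mat 0 0 f) = 1" by simp

lemma moc: "mat_of_cols n (map vec_of_list L) = Matrix.mat n (length L) (\<lambda>(i,j). L ! j ! i)"
  by (rule eq_matI) (auto simp: mat_of_cols_def vec_of_list_index)

lemma M_eq: "M_mat R qi' qi'' qj' qj'' qk' qk'' = Matrix.mat 6 6 (\<lambda>(i,j).
   [coords3 qi'' @ coords3 qi'', coords3 (- (R *v qi')) @ coords3 (- (R *v qi')),
    coords3 (- qj'') @ [0,0,0], coords3 (R *v qj') @ [0,0,0],
    [0,0,0] @ coords3 (- qk''), [0,0,0] @ coords3 (R *v qk')] ! j ! i)"
proof -
  have "M_mat R qi' qi'' qj' qj'' qk' qk'' = mat_of_cols 6 (map vec_of_list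
   [coords3 qi'' @ coords3 qi'', coords3 (- (R *v qi')) @ coords3 (- (R *v qi')),
    coords3 (- qj'') @ [0,0,0], coords3 (R *v qj') @ [0,0,0],
    [0,0,0] @ coords3 (- qk''), [0,0,0] @ coords3 (R *v qk')])"
    by (simp add: M_mat_def stack6_def coords3_def del: vec_of_list_Cons)
  then show ?thesis by (simp only: moc) (simp add: numeral_eq_Suc)
qed

definition del :: "nat \<Rightarrow> 'a list \<Rightarrow> 'a list" where "del k xs = take k xs @ drop (Suc k) xs"

lemma nth_del: "i < length xs \<Longrightarrow> i' < length xs - 1 \<Longrightarrow> del i xs ! i' = xs ! (if i' < i then i' else Suc i')"
  unfolding del_def by (auto simp: nth_append min_def)

lemma length_del: "i < length xs \<Longrightarrow> length (del i xs) = length xs - 1"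
  unfolding del_def by auto

lemma det_expL0:
  fixes L :: "'a::comm_ring_1 list list"
  assumes len: "length L = Suc n" and rl: "\<forall>c\<in>set L. length c = Suc n" and j: "j < Suc n"
  shows "Determinant.det (Matrix.mat (Suc n) (Suc n) (\<lambda>(i,j). L!j!i)) =
    (\<Sum>i<Suc n. if L!j!i = 0 then 0 else L!j!i * (-1)^(i+j) *
       Determinant.det (Matrix.mat n n (\<lambda>(i',j'). map (del i) (del j L) ! j' ! i')))"
proof -
  have "Determinant.det (Matrix.mat (Suc n) (Suc n) (\<lambda>(i,j). L!j!i)) =
    (\<Sum>i<Suc n. if L!j!i = 0 then 0 else L!j!i * (-1)^(i+j) *
       Determinant.det (Matrix.mat n n (\<lambda>(i',j'). L ! (if j' < j then j' else Suc j') ! (if i' < i then i' else Suc i'))))"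
    using det_exp[OF j, of "\<lambda>(i,j). L!j!i"] by (simp only: case_prod_beta fst_conv snd_conv)
  also have "\<dots> = (\<Sum>i<Suc n. if L!j!i = 0 then 0 else L!j!i * (-1)^(i+j) *
       Determinant.det (Matrix.mat n n (\<lambda>(i',j'). map (del i) (del j L) ! j' ! i')))"
  proof (rule sum.cong[OF refl])
    fix i assume i: "i \<in> {..<Suc n}"
    have "Matrix.mat n n (\<lambda>(i',j'). L ! (if j' < j then j' else Suc j') ! (if i' < i then i' else Suc i'))
      = Matrix.mat n n (\<lambda>(i',j'). map (del i) (del j L) ! j' ! i')"
    proof (rule eq_matI)
      fix a b assume a: "a < dim_row (Matrix.mat n n (\<lambda>(i',j'). map (del i) (del j L) ! j' ! i'))"
        and b: "b < dim_col (Matrix.mat n n (\<lambda>(i',j'). map (del i) (del j L) ! j' ! i'))"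
      have a': "a < n" and b': "b < n" using a b by auto
      have lj: "length (del j L) = n" using length_del[of j L] len j by simp
      have c: "del j L ! b = L ! (if b < j then b else Suc b)" using nth_del[of j L b] len j b' by simp
      have cl: "length (L ! (if b < j then b else Suc b)) = Suc n" using rl len b' j
        by (auto intro!: bspec[OF rl] nth_mem)
      show "Matrix.mat n n (\<lambda>(i',j'). L ! (if j' < j then j' else Suc j') ! (if i' < i then i' else Suc i')) $$ (a,b)
        = Matrix.mat n n (\<lambda>(i',j'). map (del i) (del j L) ! j' ! i') $$ (a,b)"
        using a' b' lj c cl i nth_del[of i "L ! (if b < j then b else Suc b)" a] by auto
    qed auto
    then show "(if L!j!i = 0 then 0 else L!j!i * (-1)^(i+j) *
       Determinant.det (Matrix.mat n n (\<lambda>(i',j'). L ! (if j' < j then j' else Suc j') ! (if i' < i then i' else Suc i')))) =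
      (if L!j!i = 0 then 0 else L!j!i * (-1)^(i+j) *
       Determinant.det (Matrix.mat n n (\<lambda>(i',j'). map (del i) (del j L) ! j' ! i')))" by simp
  qed
  finally show ?thesis .
qed

lemma det_expL:
  fixes L :: "'a::comm_ring_1 list list"
  assumes len: "length L = Suc n" and rl: "\<forall>c\<in>set L. length c = Suc n" and j: "j < Suc n"
  shows "Determinant.det (Matrix.mat (Suc n) (Suc n) (\<lambda>(i,j). L!j!i)) =
    (\<Sum>i<Suc n. L!j!i * (-1)^(i+j) *
       Determinant.det (Matrix.mat n n (\<lambda>(i',j'). map (del i) (del j L) ! j' ! i')))"
  unfolding det_expL0[OF assms] by (rule sum.cong) auto

lemmas e6 = det_expL[where n=5 and j=2, simplified]
lemmas e5 = det_expL[where n=4 and j=2, simplified]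
lemmas e4 = det_expL[where n=3 and j=2, simplified]
lemmas e3 = det_expL[where n=2 and j=2, simplified]
lemmas e2 = det_expL[where n=1 and j=0, simplified]
lemmas e1 = det_expL[where n=0 and j=0, simplified]

lemma d2: "Determinant.det (Matrix.mat 2 2 (\<lambda>(i,j). [[a,b],[c,d::'a::comm_ring_1]] ! j ! i)) = a*d - c*b"
proof -
  have e: "Determinant.det (Matrix.mat (Suc 0) (Suc 0) (\<lambda>(i,j). [[x]]!j!i)) = x" for x :: 'a
    using det_expL[of "[[x]]" 0 0] by simp
  show ?thesis unfolding numeral_2_eq_2
    using det_expL[of "[[a,b],[c,d]]" "Suc 0" 0] by (simp add: e del_def lessThan_Suc)
qed

lemma main: "Determinant.det (M_mat R qi' qi'' qj' qj'' qk' qk'') = Determinants.det (G_mat R qi' qi'' qj' qj'' qk' qk'')"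
  unfolding M_eq
  apply (simp add: e6 e5 e4 e3 e2 e1 coords3_def lessThan_nat_numeral del_def)
  apply (simp only: d2)
  apply (simp add: G_mat_def det_3 cross3_simps algebra_simps)
  done
theorem theorem2:
  fixes R :: "real^3^3" and qi' qi'' qj' qj'' qk' qk'' :: "real^3"
  assumes "R \<in> SO3"
  shows "Determinants.det (G_mat R qi' qi'' qj' qj'' qk' qk'')
           = Determinant.det (M_mat R qi' qi'' qj' qj'' qk' qk'')
       \<or> Determinants.det (G_mat R qi' qi'' qj' qj'' qk' qk'')
           = - Determinant.det (M_mat R qi' qi'' qj' qj'' qk' qk'')"
  using main[of R qi' qi'' qj' qj'' qk' qk''] by simp

end
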